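(* For every $\delta\in(0,1)$ and $w\in(0,1)$ there exists a model class $\mathcal{M}=\{\mu,\nu\}$ of probability measures on $\mathcal{A}^\infty$ (for some finite alphabet $\mathcal{A}$) such that, with prior $w_\mu=w$, $w_\nu=1-w$ and Bayes mixture $\xi$, with $\mu$-probability at least $\delta$ it holds that $$D_\infty > \frac{1}{4\ln 2}\ln\frac{1}{\delta}\left(\ln\frac{1}{\delta}+2\ln\frac{1-w}{w}-3\ln 2\right).$$
   Context: $\mathcal{A}^\infty$ is the set of infinite sequences over $\mathcal{A}$ with the $\sigma$-algebra generated by cylinder sets $\Gamma_x=\{x\omega\}$, $x$ a finite string. For a probability measure $\rho$ write $\rho(x):=\rho(\Gamma_x)$, $\rho(y|x):=\rho(xy)/\rho(x)$. The Bayes mixture is $\xi(A):=w_\mu\mu(A)+w_\nu\nu(A)$. Logarithms are natural. For a finite string $x$, $d_x(\mu,\xi):=\sum_{a\in\mathcal{A}}\mu(a|x)\ln\frac{\mu(a|x)}{\xi(a|x)}$; for $\omega\in\mathcal{A}^\infty$, $d_t(\omega):=d_{\omega_{<t}}(\mu,\xi)$ where $\omega_{<t}=\omega_1\cdots\omega_{t-1}$, and $D_\infty:=\sum_{t=1}^\infty d_t$. *)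

theory Defs
  imports "HOL-Probability.Probability"
begin

text \<open>Sequences over the alphabet are streams of naturals; the alphabet is {..<k}.
  rho(x) is the measure of the cylinder set Gamma_x.\<close>

definition cyl :: "nat stream measure \<Rightarrow> nat list \<Rightarrow> real" where
  "cyl \<rho> x = measure \<rho> {\<omega> \<in> space \<rho>. stake (length x) \<omega> = x}"

definition cond :: "(nat list \<Rightarrow> real) \<Rightarrow> nat \<Rightarrow> nat list \<Rightarrow> real" where
  "cond r a x = r (x @ [a]) / r x"

definition mix :: "real \<Rightarrow> nat stream measure \<Rightarrow> nat stream measure \<Rightarrow> nat list \<Rightarrow> real" where
  "mix w \<mu> \<nu> x = w * cyl \<mu> x + (1 - w) * cyl \<nu> x"

definition dKL :: "nat \<Rightarrow> real \<Rightarrow> nat stream measure \<Rightarrow> nat stream measure \<Rightarrow> nat list \<Rightarrow> real" where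
  "dKL k w \<mu> \<nu> x = (\<Sum>a<k. cond (cyl \<mu>) a x * ln (cond (cyl \<mu>) a x / cond (mix w \<mu> \<nu>) a x))"

text \<open>D_infinity(omega) = sum_{t>=1} d_{omega_{<t}}; index n = t - 1, omega_{<t} = stake n omega.
  Summed in the extended reals (terms are nonnegative; the value may be infinite).\<close>
definition Dinf :: "nat \<Rightarrow> real \<Rightarrow> nat stream measure \<Rightarrow> nat stream measure \<Rightarrow> nat stream \<Rightarrow> ereal" where
  "Dinf k w \<mu> \<nu> \<omega> = (\<Sum>n. ereal (dKL k w \<mu> \<nu> (stake n \<omega>)))"

end

theory Submission
  imports Defs
begin

definition p0 :: "nat pmf" where "p0 = pmf_of_set {0,1}"
definition muS :: "nat stream measure" where "muS = stream_space (measure_pmf p0)"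
definition nuS :: "nat stream measure" where "nuS = return (stream_space (count_space UNIV)) (sconst 0)"

lemma pmf_p0: "pmf p0 a = (if a \<in> {0,1} then 1/2 else 0)"
  unfolding p0_def by (simp add: pmf_of_set)

lemma sets_muS: "sets muS = sets (stream_space (count_space UNIV))"
  unfolding muS_def by (rule sets_stream_space_cong) simp

lemma space_muS: "space muS = UNIV"
  unfolding muS_def by (simp add: space_stream_space)

lemma prob_muS: "prob_space muS"
  unfolding muS_def by (rule prob_space.prob_space_stream_space) (rule prob_space_measure_pmf)

lemma cyl_sets: "{\<omega>\<in>space (stream_space (count_space UNIV)). stake n \<omega> = (x::nat list)} \<in> sets (stream_space (count_space UNIV))"
  by measurable

lemma cyl_sets': "{\<omega>. stake n \<omega> = (x::nat list)} \<in> sets (stream_space (count_space UNIV))"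
  using cyl_sets[of n x] by (simp add: space_stream_space)

lemma cyl_sets_mu: "{\<omega>\<in>space muS. stake n \<omega> = (x::nat list)} \<in> sets muS"
  using cyl_sets[of n x] unfolding sets_muS by (simp add: space_muS space_stream_space)

lemma emeasure_cyl_mu:
  "emeasure muS {\<omega> \<in> space muS. stake (length x) \<omega> = x} = ennreal (prod_list (map (pmf p0) x))"
proof (induction x)
  case Nil
  interpret prob_space muS by (rule prob_muS)
  show ?case by (simp add: emeasure_space_1)
next
  case (Cons c x)
  interpret P: prob_space "measure_pmf p0" by (rule prob_space_measure_pmf)
  have meas: "{\<omega> \<in> space muS. stake (length (c#x)) \<omega> = c#x} \<in> sets (stream_space (measure_pmf p0))"
    using cyl_sets_mu unfolding muS_def .
  have "emeasure muS {\<omega> \<in> space muS. stake (length (c#x)) \<omega> = c#x}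
     = (\<integral>\<^sup>+t. emeasure muS {\<omega>\<in>space muS. t ## \<omega> \<in> {\<omega> \<in> space muS. stake (length (c#x)) \<omega> = c#x}} \<partial>measure_pmf p0)"
    unfolding muS_def using prob_space.emeasure_stream_space[OF prob_space_measure_pmf meas] by (simp add: muS_def)
  also have "\<dots> = (\<integral>\<^sup>+t. emeasure muS {\<omega> \<in> space muS. stake (length x) \<omega> = x} * indicator {c} t \<partial>measure_pmf p0)"
    by (intro nn_integral_cong) (auto simp: space_muS split: split_indicator)
  also have "\<dots> = emeasure muS {\<omega> \<in> space muS. stake (length x) \<omega> = x} * emeasure (measure_pmf p0) {c}"
    by (simp add: nn_integral_cmult_indicator)
  also have "\<dots> = ennreal (pmf p0 c * prod_list (map (pmf p0) x))"
    using Cons by (simp add: emeasure_pmf_single ennreal_mult' mult.commute)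
  finally show ?case by simp
qed

lemma cyl_mu: "cyl muS x = prod_list (map (pmf p0) x)"
  unfolding cyl_def measure_def emeasure_cyl_mu
  by (subst enn2real_ennreal) (auto intro!: prod_list_nonneg)

lemma funpow_idc: "((\<lambda>a. a)^^n) c = c"
  by (induction n) auto

lemma stake_sconst: "stake n (sconst c) = replicate n c"
  by (simp add: funpow_idc map_replicate_const)

lemma prob_nuS: "prob_space nuS"
  unfolding nuS_def by (rule prob_space_return) (simp add: space_stream_space)

lemma sets_nuS: "sets nuS = sets (stream_space (count_space UNIV))"
  unfolding nuS_def by simp

lemma cyl_nu: "cyl nuS x = (if x = replicate (length x) 0 then 1 else 0)"
  unfolding cyl_def nuS_def
  by (subst measure_return) (auto simp: cyl_sets stake_sconst space_stream_space cyl_sets' indicator_def map_replicate_const)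

lemma AE_mu: "AE \<omega> in muS. \<omega> \<in> streams {..<2::nat}"
proof -
  have "AE \<omega> in stream_space (measure_pmf p0). stream_all (\<lambda>x. x < 2) \<omega>"
    by (rule prob_space.AE_stream_all[OF prob_space_measure_pmf])
       (auto simp: p0_def intro!: AE_pmfI)
  then show ?thesis unfolding muS_def by (rule AE_mp) (auto simp: streams_iff_sset)
qed

lemma AE_nu: "AE \<omega> in nuS. \<omega> \<in> streams {..<2::nat}"
proof -
  have "Measurable.pred (stream_space (count_space UNIV)) (\<lambda>\<omega>. \<omega> \<in> streams {..<2::nat})"
    by (rule pred_sets2[OF streams_sets measurable_id]) simp
  then show ?thesis unfolding nuS_def
    by (subst AE_return) (auto simp: space_stream_space sconst_streams)
qed

lemma cyl_mu_rep: "cyl muS (replicate n 0) = (1/2)^n"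
  by (simp add: cyl_mu pmf_p0 map_replicate prod_list_replicate)

lemma cyl_mu_rep_a: "a < 2 \<Longrightarrow> cyl muS (replicate n 0 @ [a]) = (1/2)^(Suc n)"
  by (auto simp: cyl_mu pmf_p0 map_replicate prod_list_replicate less_2_cases_iff)

lemma rep_snoc: "x @ [a] = replicate (length (x @ [a])) (0::nat) \<Longrightarrow> x = replicate (length x) 0"
  by (metis Un_iff in_set_replicate replicate_length_same set_append)

lemma dKL_other:
  assumes "0 < w" "x \<noteq> replicate (length x) 0"
  shows "dKL 2 w muS nuS x = 0"
proof -
  have nu: "cyl nuS x = 0" "\<And>a. cyl nuS (x @ [a]) = 0"
    using assms(2) rep_snoc by (auto simp: cyl_nu)
  have c: "\<And>a. cond (mix w muS nuS) a x = cond (cyl muS) a x"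
    using assms(1) nu by (simp add: cond_def mix_def)
  show ?thesis unfolding dKL_def c by (intro sum.neutral) auto
qed

lemma dKL_rep:
  fixes n :: nat and w :: real
  assumes "0 < w" "w < 1"
  defines "m0 \<equiv> w*(1/2)^(Suc n) + (1-w)" and "m1 \<equiv> w*(1/2)^(Suc n)"
  shows "dKL 2 w muS nuS (replicate n 0) = 1/2*ln((1/2)/(m0/(m0+m1))) + 1/2*ln((1/2)/(m1/(m0+m1)))"
proof -
  have cm: "\<And>a. a < 2 \<Longrightarrow> cond (cyl muS) a (replicate n 0) = 1/2"
    by (simp add: cond_def cyl_mu_rep cyl_mu_rep_a)
  have mx: "mix w muS nuS (replicate n 0) = m0 + m1"
    unfolding mix_def m0_def m1_def by (simp add: cyl_mu_rep cyl_nu field_simps)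
  have mx0: "mix w muS nuS (replicate n 0 @ [0]) = m0"
  proof -
    have e: "replicate n 0 @ [0::nat] = replicate (Suc n) 0" by (simp add: replicate_append_same)
    show ?thesis unfolding e mix_def m0_def
      by (simp only: cyl_mu_rep cyl_nu length_replicate if_True) simp
  qed
  have mx1: "mix w muS nuS (replicate n 0 @ [Suc 0]) = m1"
  proof -
    have ne: "replicate n 0 @ [Suc 0] \<noteq> 0 # replicate n (0::nat)"
    proof
      assume h: "replicate n 0 @ [Suc 0] = 0 # replicate n (0::nat)"
      have "Suc 0 \<in> set (replicate n 0 @ [Suc 0])" by simp
      then have "Suc 0 \<in> set (0 # replicate n (0::nat))" unfolding h .
      then show False by simp
    qed
    show ?thesis unfolding mix_def m1_def using ne by (simp add: cyl_mu_rep_a cyl_nu)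
  qed
  show ?thesis
    unfolding dKL_def by (simp add: numeral_2_eq_2 cm cond_def[of "mix w muS nuS"] mx mx0 mx1)
qed

lemma G_bounds:
  fixes m0 m1 :: real
  assumes "0 < m0" "0 < m1"
  shows "1/2*ln((1/2)/(m0/(m0+m1))) + 1/2*ln((1/2)/(m1/(m0+m1))) \<ge> 0"
    and "1/2*ln((1/2)/(m0/(m0+m1))) + 1/2*ln((1/2)/(m1/(m0+m1))) \<ge> -ln 2/2 + 1/2*ln((m0+m1)/(2*m1))"
proof -
  have t1: "(1/2)/(m0/(m0+m1)) = (m0+m1)/(2*m0)" and t2: "(1/2)/(m1/(m0+m1)) = (m0+m1)/(2*m1)"
    using assms by (simp_all add: field_simps)
  have p1: "(m0+m1)/(2*m0) > 0" "(m0+m1)/(2*m1) > 0" using assms by simp_all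
  have "(m0+m1)/(2*m0) * ((m0+m1)/(2*m1)) = (m0+m1)^2/(4*m0*m1)"
    by (simp add: power2_eq_square field_simps)
  also have "\<dots> \<ge> 1"
  proof -
    have e: "(m0+m1)^2 - 4*m0*m1 = (m0-m1)^2" by (simp add: power2_eq_square algebra_simps)
    have "4*m0*m1 \<le> (m0+m1)^2" using e zero_le_power2[of "m0-m1"] by linarith
    then show ?thesis using assms by simp
  qed
  finally have "ln ((m0+m1)/(2*m0) * ((m0+m1)/(2*m1))) \<ge> 0" by (rule ln_ge_zero)
  moreover have "ln ((m0+m1)/(2*m0) * ((m0+m1)/(2*m1))) = ln ((m0+m1)/(2*m0)) + ln ((m0+m1)/(2*m1))"
    by (rule ln_mult_pos[OF p1])
  ultimately show "1/2*ln((1/2)/(m0/(m0+m1))) + 1/2*ln((1/2)/(m1/(m0+m1))) \<ge> 0"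
    unfolding t1 t2 by linarith
  have "(m0+m1)/(2*m0) \<ge> 1/2" using assms by (simp add: field_simps)
  then have "ln ((m0+m1)/(2*m0)) \<ge> ln (1/2)" using p1 by simp
  then show "1/2*ln((1/2)/(m0/(m0+m1))) + 1/2*ln((1/2)/(m1/(m0+m1))) \<ge> -ln 2/2 + 1/2*ln((m0+m1)/(2*m1))"
    unfolding t1 t2 by (simp add: ln_div)
qed

lemma d_bounds:
  fixes w :: real and n :: nat
  assumes "0 < w" "w < 1"
  shows "dKL 2 w muS nuS (replicate n 0) \<ge> 0"
    and "dKL 2 w muS nuS (replicate n 0) \<ge> -ln 2/2 + (ln((1-w)/w) + n*ln 2)/2"
proof -
  define m0 where "m0 = w*(1/2)^(Suc n) + (1-w)"
  define m1 where "m1 = w*(1/2)^(Suc n)"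
  have "w*(1/2)^(Suc n) > 0" using assms by simp
  then have pos: "0 < m0" "0 < m1" using assms unfolding m0_def m1_def by linarith+
  have d: "dKL 2 w muS nuS (replicate n 0) = 1/2*ln((1/2)/(m0/(m0+m1))) + 1/2*ln((1/2)/(m1/(m0+m1)))"
    unfolding m0_def m1_def by (rule dKL_rep[OF assms])
  show "dKL 2 w muS nuS (replicate n 0) \<ge> 0" unfolding d by (rule G_bounds(1)[OF pos])
  have r: "(m0+m1)/(2*m1) = 1 + (1-w)/w * 2^n"
    using assms unfolding m0_def m1_def by (simp add: field_simps power_one_over)
  have "(1-w)/w * 2^n > 0" using assms by simp
  then have "ln (1 + (1-w)/w * 2^n) \<ge> ln ((1-w)/w * 2^n)" by simp
  also have "ln ((1-w)/w * 2^n) = ln((1-w)/w) + n*ln 2"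
    using assms by (subst ln_mult) (auto simp: ln_realpow)
  finally show "dKL 2 w muS nuS (replicate n 0) \<ge> -ln 2/2 + (ln((1-w)/w) + n*ln 2)/2"
    using G_bounds(2)[OF pos] unfolding d r by argo
qed

lemma dKL_nonneg:
  assumes "0 < w" "w < 1"
  shows "dKL 2 w muS nuS x \<ge> 0"
proof (cases "x = replicate (length x) 0")
  case True
  then show ?thesis using d_bounds(1)[OF assms, of "length x"] by metis
next
  case False
  then show ?thesis using dKL_other[OF assms(1) False] by simp
qed

lemma fin_ineq:
  fixes x l b d0 J :: real
  assumes "J \<le> x" "x < J + 1" "0 < x" "0 < l" "0 \<le> d0" "(b - l)/2 \<le> d0" "0 \<le> J"
  shows "d0 + J*b/2 + l*J*(J-1)/4 > x*(x*l+2*b-3*l)/4"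
proof -
  define f where "f = x - J"
  have f: "0 \<le> f" "f < 1" using assms f_def by auto
  have x: "x = J + f" using f_def by simp
  have key: "l*J*(J-1) - x*(x*l - 3*l) = l*(2*J*(1-f) + f*(3-f))"
    unfolding x by (simp add: algebra_simps power2_eq_square)
  have pos: "2*J*(1-f) + f*(1-f) > 0"
  proof (cases "f = 0")
    case True then have "J > 0" using assms x by simp
    then show ?thesis using True by simp
  next
    case False then have "f > 0" using f by simp
    then show ?thesis using f assms by (intro add_nonneg_pos) (auto intro: mult_pos_pos)
  qed
  have e: "4*(d0 + J*b/2 + l*J*(J-1)/4) - 4*(x*(x*l+2*b-3*l)/4) = 4*d0 + l*(2*J*(1-f) + f*(3-f)) - 2*f*b"
    unfolding x by (simp add: field_simps)
  have pp: "l*(2*J*(1-f) + f*(3-f)) = l*(2*J*(1-f) + f*(1-f)) + 2*f*l" by (simp add: algebra_simps)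
  have q: "\<And>A B C::real. 4*A - 4*B = C \<Longrightarrow> 0 < C \<Longrightarrow> B < A" by linarith
  show ?thesis
  proof (cases "b \<le> l")
    case True
    have "2*f*b \<le> 2*f*l" using True f by (intro mult_left_mono) auto
    moreover have "l*(2*J*(1-f) + f*(1-f)) > 0" using pos assms by simp
    ultimately have "4*d0 + l*(2*J*(1-f) + f*(3-f)) - 2*f*b > 0" using pp assms(5) by linarith
    then show ?thesis using e[symmetric] by (metis q)
  next
    case False
    have "2*(1-f)*b \<ge> 2*(1-f)*l" using False f by (intro mult_left_mono) auto
    moreover have "l*(2*J*(1-f) + f*(1-f)) > 0" using pos assms by simp
    moreover have "2*(1-f)*b = 2*b - 2*f*b" "2*(1-f)*l = 2*l - 2*f*l" by (simp_all add: algebra_simps)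
    ultimately have "4*d0 + l*(2*J*(1-f) + f*(3-f)) - 2*f*b > 0" using pp assms(6) by argo
    then show ?thesis using e[symmetric] by (metis q)
  qed
qed

lemma sum_real_idx: "(\<Sum>i<J. real i) = real J * (real J - 1) / 2"
  by (induction J) (auto simp: field_simps)

lemma Dinf_meas: "(\<lambda>\<omega>. Dinf k w muS nuS \<omega>) \<in> borel_measurable (stream_space (count_space UNIV))"
  unfolding Dinf_def by measurable

lemma sum_d_bound:
  fixes w b :: real and J :: nat
  assumes "0 < w" "w < 1"
  defines "b \<equiv> ln ((1-w)/w)"
  shows "\<exists>d0. 0 \<le> d0 \<and> (b - ln 2)/2 \<le> d0 \<and>
     (\<Sum>n<Suc J. dKL 2 w muS nuS (replicate n 0)) \<ge> d0 + real J*b/2 + ln 2*real J*(real J-1)/4"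
proof -
  let ?d = "\<lambda>n. dKL 2 w muS nuS (replicate n 0)"
  have h0: "0 \<le> ?d 0" "(b - ln 2)/2 \<le> ?d 0"
    using d_bounds[OF assms(1,2), of 0] unfolding b_def by auto
  have "(\<Sum>i<J. (b + i*ln 2)/2) \<le> (\<Sum>i<J. ?d (Suc i))"
  proof (intro sum_mono)
    fix i assume "i \<in> {..<J}"
    show "(b + i*ln 2)/2 \<le> ?d (Suc i)"
      using d_bounds(2)[OF assms(1,2), of "Suc i"] unfolding b_def by (simp add: algebra_simps)
  qed
  also have "(\<Sum>i<J. (b + i*ln 2)/2) = real J*b/2 + ln 2*real J*(real J-1)/4"
    by (simp add: sum_divide_distrib[symmetric] sum.distrib sum_distrib_right[symmetric] sum_real_idx)
  finally have "real J*b/2 + ln 2*real J*(real J-1)/4 \<le> (\<Sum>i<J. ?d (Suc i))" .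
  moreover have "(\<Sum>n<Suc J. ?d n) = ?d 0 + (\<Sum>i<J. ?d (Suc i))"
    by (rule sum.lessThan_Suc_shift)
  ultimately show ?thesis using h0 by (intro exI[of _ "?d 0"]) auto
qed

theorem proposition1:
  fixes \<delta> w :: real
  assumes "0 < \<delta>" "\<delta> < 1" "0 < w" "w < 1"
  shows "\<exists>(k::nat) (\<mu>::nat stream measure) (\<nu>::nat stream measure).
           k > 0 \<and>
           prob_space \<mu> \<and> prob_space \<nu> \<and>
           sets \<mu> = sets (stream_space (count_space UNIV)) \<and>
           sets \<nu> = sets (stream_space (count_space UNIV)) \<and>
           (AE \<omega> in \<mu>. \<omega> \<in> streams {..<k}) \<and>
           (AE \<omega> in \<nu>. \<omega> \<in> streams {..<k}) \<and>
           measure \<mu> {\<omega> \<in> space \<mu>.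
              Dinf k w \<mu> \<nu> \<omega> >
                ereal (1 / (4 * ln 2) * ln (1 / \<delta>) *
                       (ln (1 / \<delta>) + 2 * ln ((1 - w) / w) - 3 * ln 2))} \<ge> \<delta>"
proof -
  define L where "L = ln (1/\<delta>)"
  define b where "b = ln ((1-w)/w)"
  define l where "l = (ln 2 :: real)"
  define x where "x = L / l"
  define J where "J = nat (floor x)"
  define R where "R = 1 / (4 * ln 2) * ln (1 / \<delta>) * (ln (1 / \<delta>) + 2 * ln ((1 - w) / w) - 3 * ln 2)"
  have l: "0 < l" unfolding l_def by simp
  have L: "0 < L" unfolding L_def using assms by simp
  have x: "0 < x" unfolding x_def using l L by simp
  have J1: "real J \<le> x" "x < real J + 1" unfolding J_def using x by linarith+
  have R: "R = x*(x*l+2*b-3*l)/4"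
    unfolding R_def x_def b_def L_def[symmetric] l_def[symmetric] using l by (simp add: field_simps)
  obtain d0 where d0: "0 \<le> d0" "(b - l)/2 \<le> d0"
      "(\<Sum>n<Suc J. dKL 2 w muS nuS (replicate n 0)) \<ge> d0 + real J*b/2 + l*real J*(real J-1)/4"
    using sum_d_bound[OF assms(3,4), of J] unfolding b_def l_def by blast
  have Sgt: "(\<Sum>n<Suc J. dKL 2 w muS nuS (replicate n 0)) > R"
    unfolding R using fin_ineq[OF J1 x l d0(1,2) of_nat_0_le_iff] d0(3) by (rule order.strict_trans2)
  define C where "C = {\<omega> \<in> space muS. stake J \<omega> = replicate J 0}"
  define S where "S = {\<omega> \<in> space muS. Dinf 2 w muS nuS \<omega> > ereal R}"
  interpret P: prob_space muS by (rule prob_muS)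
  have mC: "measure muS C = (1/2)^J"
    using cyl_mu_rep[of J] unfolding cyl_def C_def by simp
  have "ln (2^J) = real J * l" unfolding l_def by (simp add: ln_realpow)
  also have "\<dots> \<le> L" using J1 l unfolding x_def by (simp add: field_simps)
  finally have "ln (2^J) \<le> ln (1/\<delta>)" unfolding L_def .
  then have "(2::real)^J \<le> 1/\<delta>" using assms by simp
  then have dl: "\<delta> \<le> (1/2)^J" using assms by (simp add: field_simps power_one_over)
  have CS: "C \<subseteq> S"
  proof
    fix \<omega> assume "\<omega> \<in> C"
    then have sp: "\<omega> \<in> space muS" and st: "stake J \<omega> = replicate J 0" unfolding C_def by auto
    have stn: "stake n \<omega> = replicate n 0" if "n < Suc J" for n
    proof -
      have "stake n \<omega> = take n (stake J \<omega>)" using that by (simp add: take_stake)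
      then show ?thesis using st that by simp
    qed
    have "ereal R < ereal (\<Sum>n<Suc J. dKL 2 w muS nuS (replicate n 0))" using Sgt by simp
    also have "\<dots> = (\<Sum>n<Suc J. ereal (dKL 2 w muS nuS (stake n \<omega>)))"
      using stn by simp
    also have "\<dots> \<le> Dinf 2 w muS nuS \<omega>"
      unfolding Dinf_def by (rule suminf_upper) (simp add: dKL_nonneg[OF assms(3,4)])
    finally show "\<omega> \<in> S" unfolding S_def using sp by simp
  qed
  have [measurable]: "(\<lambda>\<omega>. Dinf 2 w muS nuS \<omega>) \<in> borel_measurable (stream_space (count_space UNIV))"
    by (rule Dinf_meas)
  have "{\<omega> \<in> space (stream_space (count_space UNIV)). ereal R < Dinf 2 w muS nuS \<omega>} \<in> sets (stream_space (count_space UNIV))"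
    by measurable
  then have Sm: "S \<in> sets muS" unfolding S_def sets_muS by (simp add: space_muS space_stream_space)
  have "\<delta> \<le> measure muS S" using dl mC P.finite_measure_mono[OF CS Sm] by simp
  then show ?thesis
    using prob_muS prob_nuS sets_muS sets_nuS AE_mu AE_nu unfolding S_def R_def
    by (intro exI[of _ "2::nat"] exI[of _ muS] exI[of _ nuS]) auto
qed

end
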